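(* Let $\{\mathcal G,(\Gamma_0,\Gamma_1),(\widetilde\Gamma_0,\widetilde\Gamma_1)\}$ be a triple for the adjoint pair $\{S,\widetilde S\}$ satisfying (G), (D), (M), with $\rho(A_0)\neq\emptyset$ (equivalently $\rho(\widetilde A_0)\neq\emptyset$), $\gamma$-fields $\gamma,\widetilde\gamma$ and Weyl functions $M,\widetilde M$. Let $B_1,B_2,\widetilde B_1,\widetilde B_2$ be linear operators in $\mathcal G$, and let $\lambda\in\rho(A_0)$, $\mu\in\rho(\widetilde A_0)$. (i) If $\lambda\notin\sigma_p(A_{B_1B_2})$ and $f\in\mathfrak H$ satisfies $\widetilde\gamma(\overline\lambda)^*f\in\operatorname{dom}B_2$ and $B_2\widetilde\gamma(\overline\lambda)^*f\in\operatorname{ran}(I-B_2M(\lambda)B_1)$, then $f\in\operatorname{ran}(A_{B_1B_2}-\lambda)$ and $(A_{B_1B_2}-\lambda)^{-1}f=(A_0-\lambda)^{-1}f+\gamma(\lambda)B_1(I-B_2M(\lambda)B_1)^{-1}B_2\widetilde\gamma(\overline\lambda)^*f$. If these two conditions hold for all $f\in\mathfrak H$, then $A_{B_1B_2}-\lambda$ is a bijection of $\operatorname{dom}A_{B_1B_2}$ onto $\mathfrak H$. (ii) If $\mu\notin\sigma_p(\widetilde A_{\widetilde B_1\widetilde B_2})$ and $g\in\mathfrak H$ satisfies $\gamma(\overline\mu)^*g\in\operatorname{dom}\widetilde B_2$ and $\widetilde B_2\gamma(\overline\mu)^*g\in\operatorname{ran}(I-\widetilde B_2\widetilde M(\mu)\widetilde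 B_1)$, then $g\in\operatorname{ran}(\widetilde A_{\widetilde B_1\widetilde B_2}-\mu)$ and $(\widetilde A_{\widetilde B_1\widetilde B_2}-\mu)^{-1}g=(\widetilde A_0-\mu)^{-1}g+\widetilde\gamma(\mu)\widetilde B_1(I-\widetilde B_2\widetilde M(\mu)\widetilde B_1)^{-1}\widetilde B_2\gamma(\overline\mu)^*g$. If these two conditions hold for all $g\in\mathfrak H$, then $\widetilde A_{\widetilde B_1\widetilde B_2}-\mu$ is a bijection of $\operatorname{dom}\widetilde A_{\widetilde B_1\widetilde B_2}$ onto $\mathfrak H$.
   Context: Let $\mathfrak H$ be a separable Hilbert space. An adjoint pair $\{S,\widetilde S\}$ consists of densely defined closed operators $S,\widetilde S$ in $\mathfrak H$ with $(Sf,g)=(f,\widetilde Sg)$ for all $f\in\operatorname{dom}S$, $g\in\operatorname{dom}\widetilde S$. Fix operators $T\subset S^*$ and $\widetilde T\subset\widetilde S^*$ which are cores, i.e. $\overline T=S^*$ and $\overline{\widetilde T}=\widetilde S^*$. A triple $\{\mathcal G,(\Gamma_0,\Gamma_1),(\widetilde\Gamma_0,\widetilde\Gamma_1)\}$ for $\{S,\widetilde S\}$ consists of a Hilbert space $\mathcal G$ and linear maps $\Gamma_0,\Gamma_1:\operatorname{dom}T\to\mathcal G$, $\widetilde\Gamma_0,\widetilde\Gamma_1:\operatorname{dom}\widetilde T\to\mathcal G$. Put $A_0:=T\upharpoonright\ker\Gamma_0$ and $\widetilde A_0:=\widetilde T\upharpoonright\ker\widetilde\Gamma_0$. Conditions: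 (G) $(Tf,g)_{\mathfrak H}-(f,\widetilde Tg)_{\mathfrak H}=(\Gamma_1f,\widetilde\Gamma_0g)_{\mathcal G}-(\Gamma_0f,\widetilde\Gamma_1g)_{\mathcal G}$ for all $f\in\operatorname{dom}T$, $g\in\operatorname{dom}\widetilde T$; (D) $\operatorname{ran}\Gamma_0$ and $\operatorname{ran}\widetilde\Gamma_0$ are dense in $\mathcal G$; (M) $A_0^*=\widetilde A_0$ and $\widetilde A_0^*=A_0$. For $\lambda\in\rho(A_0)$ one has $\operatorname{dom}T=\ker\Gamma_0\dotplus\ker(T-\lambda)$, so $\Gamma_0\upharpoonright\ker(T-\lambda)$ is injective; similarly for $\widetilde T$. The $\gamma$-fields are $\gamma(\lambda):=(\Gamma_0\upharpoonright\ker(T-\lambda))^{-1}$, $\widetilde\gamma(\mu):=(\widetilde\Gamma_0\upharpoonright\ker(\widetilde T-\mu))^{-1}$; the Weyl functions are $M(\lambda):=\Gamma_1\gamma(\lambda)$, $\lambda\in\rho(A_0)$, and $\widetilde M(\mu):=\widetilde\Gamma_1\widetilde\gamma(\mu)$, $\mu\in\rho(\widetilde A_0)$. Products of operators have their natural domains, e.g. $\operatorname{dom}(B_1B_2)=\{\varphi\in\operatorname{dom}B_2:B_2\varphi\in\operatorname{dom}B_1\}$, and $(I-B_2M(\lambda)B_1)^{-1}$ denotes the inverse of the (injective) operator $I-B_2M(\lambda)B_1$ defined on its range. Define $A_{B_1B_2}f:=Tf$ on $\operatorname{dom}A_{B_1B_2}:=\{f\in\operatorname{dom}T:\Gamma_1f\in\operatorname{dom}(B_1B_2),\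 B_1B_2\Gamma_1f=\Gamma_0f\}$ and $\widetilde A_{\widetilde B_1\widetilde B_2}g:=\widetilde Tg$ on $\operatorname{dom}\widetilde A_{\widetilde B_1\widetilde B_2}:=\{g\in\operatorname{dom}\widetilde T:\widetilde\Gamma_1g\in\operatorname{dom}(\widetilde B_1\widetilde B_2),\ \widetilde B_1\widetilde B_2\widetilde\Gamma_1g=\widetilde\Gamma_0g\}$. $\sigma_p$ denotes the set of eigenvalues. *)

theory Defs
  imports "HOL-Analysis.Analysis"
begin

class complex_inner = real_normed_vector +
  fixes scaleC :: "complex \<Rightarrow> 'a \<Rightarrow> 'a" (infixr "*\<^sub>C" 75)
    and cinner :: "'a \<Rightarrow> 'a \<Rightarrow> complex"
  assumes scaleC_add_right: "a *\<^sub>C (x + y) = a *\<^sub>C x + a *\<^sub>C y"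
    and scaleC_add_left: "(a + b) *\<^sub>C x = a *\<^sub>C x + b *\<^sub>C x"
    and scaleC_scaleC: "a *\<^sub>C (b *\<^sub>C x) = (a * b) *\<^sub>C x"
    and scaleC_one: "1 *\<^sub>C x = x"
    and scaleR_scaleC: "scaleR r x = complex_of_real r *\<^sub>C x"
    and cinner_commute: "cinner x y = cnj (cinner y x)"
    and cinner_add_left: "cinner (x + y) z = cinner x z + cinner y z"
    and cinner_scaleC_left: "cinner (a *\<^sub>C x) y = a * cinner x y"
    and cinner_self_real: "Im (cinner x x) = 0"
    and cinner_self_nonneg: "0 \<le> Re (cinner x x)"
    and cinner_self_eq_zero: "cinner x x = 0 \<longleftrightarrow> x = 0"
    and norm_eq_sqrt_cinner: "norm x = sqrt (Re (cinner x x))"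

class chilbert_space = complex_inner + complete_space

definition separable_space :: "'a::metric_space itself \<Rightarrow> bool" where
  "separable_space _ \<longleftrightarrow> (\<exists>D::'a set. countable D \<and> closure D = UNIV)"

text \<open>An operator from 'a to 'b is represented by its graph, a subset of 'a \<times> 'b.
Domain = domain, Range = range, converse = inverse, and relational composition
A O B is the operator product "B A" with its natural domain.\<close>

definition linrel :: "('a::complex_inner \<times> 'b::complex_inner) set \<Rightarrow> bool" where
  "linrel A \<longleftrightarrow> (0, 0) \<in> A \<and>
     (\<forall>x y u v. (x, y) \<in> A \<longrightarrow> (u, v) \<in> A \<longrightarrow> (x + u, y + v) \<in> A) \<and>
     (\<forall>c x y. (x, y) \<in> A \<longrightarrow> (c *\<^sub>C x, c *\<^sub>C y) \<in> A)"

definition linop :: "('a::complex_inner \<times> 'b::complex_inner) set \<Rightarrow> bool" where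
  "linop A \<longleftrightarrow> linrel A \<and> (\<forall>y. (0, y) \<in> A \<longrightarrow> y = 0)"

definition opapp :: "('a \<times> 'b) set \<Rightarrow> 'a \<Rightarrow> 'b" where
  "opapp A x = (THE y. (x, y) \<in> A)"

definition adj :: "('a::complex_inner \<times> 'b::complex_inner) set \<Rightarrow> ('b \<times> 'a) set" where
  "adj A = {(y, x). \<forall>u v. (u, v) \<in> A \<longrightarrow> cinner v y = cinner u x}"

definition densely_defined :: "('a::complex_inner \<times> 'b) set \<Rightarrow> bool" where
  "densely_defined A \<longleftrightarrow> closure (Domain A) = UNIV"

definition shift :: "('a::complex_inner \<times> 'a) set \<Rightarrow> complex \<Rightarrow> ('a \<times> 'a) set" where
  "shift A z = {(x, y - z *\<^sub>C x) | x y. (x, y) \<in> A}"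

definition id_minus :: "('a::complex_inner \<times> 'a) set \<Rightarrow> ('a \<times> 'a) set" where
  "id_minus C = {(x, x - y) | x y. (x, y) \<in> C}"

definition opsum :: "('a \<times> 'b::plus) set \<Rightarrow> ('a \<times> 'b) set \<Rightarrow> ('a \<times> 'b) set" where
  "opsum A B = {(x, y + z) | x y z. (x, y) \<in> A \<and> (x, z) \<in> B}"

definition point_spectrum :: "('a::complex_inner \<times> 'a) set \<Rightarrow> complex set" where
  "point_spectrum A = {z. \<exists>x. x \<noteq> 0 \<and> (x, z *\<^sub>C x) \<in> A}"

definition resolvent_set :: "('a::complex_inner \<times> 'a) set \<Rightarrow> complex set" where
  "resolvent_set A = {z. linop (converse (shift A z)) \<and> Range (shift A z) = UNIV \<and>
      (\<exists>C. \<forall>x y. (x, y) \<in> shift A z \<longrightarrow> norm x \<le> C * norm y)}"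

definition linear_on :: "'a set \<Rightarrow> ('a::complex_inner \<Rightarrow> 'b::complex_inner) \<Rightarrow> bool" where
  "linear_on D F \<longleftrightarrow> (\<forall>x\<in>D. \<forall>y\<in>D. F (x + y) = F x + F y) \<and>
                      (\<forall>c. \<forall>x\<in>D. F (c *\<^sub>C x) = c *\<^sub>C F x)"

definition adjoint_pair :: "('h::complex_inner \<times> 'h) set \<Rightarrow> ('h \<times> 'h) set \<Rightarrow> bool" where
  "adjoint_pair S St \<longleftrightarrow> linop S \<and> linop St \<and> densely_defined S \<and> densely_defined St \<and>
     closed S \<and> closed St \<and>
     (\<forall>f k g l. (f, k) \<in> S \<longrightarrow> (g, l) \<in> St \<longrightarrow> cinner k g = cinner f l)"

definition is_core_of_adj :: "('h::complex_inner \<times> 'h) set \<Rightarrow> ('h \<times> 'h) set \<Rightarrow> bool" where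
  "is_core_of_adj T S \<longleftrightarrow> linop T \<and> T \<subseteq> adj S \<and> closure T = adj S"

definition kerT :: "('h::complex_inner \<times> 'h) set \<Rightarrow> complex \<Rightarrow> 'h set" where
  "kerT T z = {f. (f, z *\<^sub>C f) \<in> T}"

definition A0 :: "('h::complex_inner \<times> 'h) set \<Rightarrow> ('h \<Rightarrow> 'g::complex_inner) \<Rightarrow> ('h \<times> 'h) set" where
  "A0 T \<Gamma>0 = {(f, k). (f, k) \<in> T \<and> \<Gamma>0 f = 0}"

definition gamma_field :: "('h::complex_inner \<times> 'h) set \<Rightarrow> ('h \<Rightarrow> 'g::complex_inner) \<Rightarrow> complex \<Rightarrow> ('g \<times> 'h) set" where
  "gamma_field T \<Gamma>0 z = {(\<Gamma>0 f, f) | f. f \<in> kerT T z}"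

definition weyl :: "('h::complex_inner \<times> 'h) set \<Rightarrow> ('h \<Rightarrow> 'g::complex_inner) \<Rightarrow> ('h \<Rightarrow> 'g) \<Rightarrow> complex \<Rightarrow> ('g \<times> 'g) set" where
  "weyl T \<Gamma>0 \<Gamma>1 z = gamma_field T \<Gamma>0 z O {(f, \<Gamma>1 f) | f. True}"

text \<open>A_{B_1 B_2}: T restricted to {f. \<Gamma>_1 f \<in> dom(B_1 B_2), B_1 B_2 \<Gamma>_1 f = \<Gamma>_0 f};
  the product B_1 B_2 (first B_2, then B_1) is the composition B_2 O B_1.\<close>
definition ext_op :: "('h::complex_inner \<times> 'h) set \<Rightarrow> ('h \<Rightarrow> 'g::complex_inner) \<Rightarrow> ('h \<Rightarrow> 'g)
     \<Rightarrow> ('g \<times> 'g) set \<Rightarrow> ('g \<times> 'g) set \<Rightarrow> ('h \<times> 'h) set" where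
  "ext_op T \<Gamma>0 \<Gamma>1 B1 B2 = {(f, k). (f, k) \<in> T \<and> (\<Gamma>1 f, \<Gamma>0 f) \<in> B2 O B1}"

definition triple_GDM :: "('h::complex_inner \<times> 'h) set \<Rightarrow> ('h \<times> 'h) set \<Rightarrow> ('h \<times> 'h) set \<Rightarrow> ('h \<times> 'h) set
     \<Rightarrow> ('h \<Rightarrow> 'g::complex_inner) \<Rightarrow> ('h \<Rightarrow> 'g) \<Rightarrow> ('h \<Rightarrow> 'g) \<Rightarrow> ('h \<Rightarrow> 'g) \<Rightarrow> bool" where
  "triple_GDM S St T Tt \<Gamma>0 \<Gamma>1 \<Gamma>t0 \<Gamma>t1 \<longleftrightarrow>
     adjoint_pair S St \<and> is_core_of_adj T S \<and> is_core_of_adj Tt St \<and>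
     linear_on (Domain T) \<Gamma>0 \<and> linear_on (Domain T) \<Gamma>1 \<and>
     linear_on (Domain Tt) \<Gamma>t0 \<and> linear_on (Domain Tt) \<Gamma>t1 \<and>
     \<comment> \<open>(G)\<close>
     (\<forall>f k g l. (f, k) \<in> T \<longrightarrow> (g, l) \<in> Tt \<longrightarrow>
        cinner k g - cinner f l = cinner (\<Gamma>1 f) (\<Gamma>t0 g) - cinner (\<Gamma>0 f) (\<Gamma>t1 g)) \<and>
     \<comment> \<open>(D)\<close>
     closure (\<Gamma>0 ` Domain T) = UNIV \<and> closure (\<Gamma>t0 ` Domain Tt) = UNIV \<and>
     \<comment> \<open>(M)\<close>
     adj (A0 T \<Gamma>0) = A0 Tt \<Gamma>t0 \<and> adj (A0 Tt \<Gamma>t0) = A0 T \<Gamma>0"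

end

theory Submission
  imports Defs
begin



lemma scaleC_zero_left [simp]: "0 *\<^sub>C x = 0"
  by (subst of_real_0[symmetric], subst scaleR_scaleC[symmetric]) simp

lemma scaleC_zero_right [simp]: "a *\<^sub>C 0 = 0"
  using scaleC_add_right[of a 0 0] by simp

lemma scaleC_minus_left: "(- a) *\<^sub>C x = - (a *\<^sub>C x)"
proof -
  have "a *\<^sub>C x + (-a) *\<^sub>C x = 0" by (simp add: scaleC_add_left[symmetric])
  then show ?thesis by (rule minus_unique[symmetric])
qed

lemma scaleC_minus_right: "a *\<^sub>C (- x) = - (a *\<^sub>C x)"
proof -
  have "a *\<^sub>C x + a *\<^sub>C (- x) = 0" by (simp add: scaleC_add_right[symmetric])
  then show ?thesis by (rule minus_unique[symmetric])
qed

lemma scaleC_diff_right: "a *\<^sub>C (x - y) = a *\<^sub>C x - a *\<^sub>C y"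
  by (simp only: diff_conv_add_uminus scaleC_add_right scaleC_minus_right)

lemma scaleC_diff_left: "(a - b) *\<^sub>C x = a *\<^sub>C x - b *\<^sub>C x"
  by (simp only: diff_conv_add_uminus scaleC_add_left scaleC_minus_left)

lemma uminus_scaleC: "- x = (-1) *\<^sub>C x"
  by (simp add: scaleC_minus_left scaleC_one)

lemma cinner_zero_left [simp]: "cinner 0 y = 0"
  using cinner_add_left[of 0 0 y] by simp

lemma cinner_zero_right [simp]: "cinner y 0 = 0"
  using cinner_commute[of y 0] by simp

lemma cinner_add_right: "cinner x (y + z) = cinner x y + cinner x z"
  using cinner_commute[of x "y+z"] cinner_commute[of y x] cinner_commute[of z x]
  by (simp add: cinner_add_left)

lemma cinner_scaleC_right: "cinner x (a *\<^sub>C y) = cnj a * cinner x y"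
  using cinner_commute[of x "a *\<^sub>C y"] cinner_commute[of y x]
  by (simp add: cinner_scaleC_left)

lemma cinner_minus_left: "cinner (- x) y = - cinner x y"
  by (simp add: uminus_scaleC[of x] cinner_scaleC_left)

lemma cinner_minus_right: "cinner y (- x) = - cinner y x"
  by (simp add: uminus_scaleC[of x] cinner_scaleC_right)

lemma cinner_diff_left: "cinner (x - y) z = cinner x z - cinner y z"
  by (simp only: diff_conv_add_uminus cinner_add_left cinner_minus_left)

lemma cinner_diff_right: "cinner z (x - y) = cinner z x - cinner z y"
  by (simp only: diff_conv_add_uminus cinner_add_right cinner_minus_right)

lemma cinner_self_norm: "cinner x x = complex_of_real ((norm x)\<^sup>2)"
proof -
  have "(norm x)\<^sup>2 = Re (cinner x x)"
    using norm_eq_sqrt_cinner[of x] cinner_self_nonneg[of x] by simp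
  then show ?thesis using cinner_self_real[of x] by (simp add: complex_eq_iff)
qed

lemma expand_sq:
  assumes "n \<noteq> 0"
  shows "cinner (e - (cinner e n / cinner n n) *\<^sub>C n) (e - (cinner e n / cinner n n) *\<^sub>C n)
     = complex_of_real ((norm e)\<^sup>2 - (cmod (cinner e n))\<^sup>2 / (norm n)\<^sup>2)"
proof -
  define c where "c = cinner e n"
  define r where "r = (norm n)\<^sup>2"
  have r: "r > 0" using assms by (simp add: r_def)
  have nn: "cinner n n = complex_of_real r" by (simp add: r_def cinner_self_norm)
  have ne: "cinner n e = cnj c" using cinner_commute[of n e] by (simp add: c_def)
  have cc: "c * cnj c = complex_of_real ((cmod c)\<^sup>2)" by (rule complex_norm_square[symmetric])
  define t where "t = c / complex_of_real r"
  have "cinner (e - t *\<^sub>C n) (e - t *\<^sub>C n)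
     = cinner e e - t * cinner n e - cnj t * (cinner e n - t * cinner n n)"
    by (simp only: cinner_diff_left cinner_diff_right cinner_scaleC_left cinner_scaleC_right)
  also have "\<dots> = cinner e e - (c * cnj c) / complex_of_real r"
    unfolding t_def nn ne c_def[symmetric] using r by (simp add: field_simps)
  also have "\<dots> = complex_of_real ((norm e)\<^sup>2 - (cmod c)\<^sup>2 / r)"
    unfolding cc cinner_self_norm[of e] by simp
  finally have fin: "cinner (e - t *\<^sub>C n) (e - t *\<^sub>C n) = complex_of_real ((norm e)\<^sup>2 - (cmod c)\<^sup>2 / r)" .
  have t': "cinner e n / cinner n n = t" by (simp add: t_def c_def nn)
  show ?thesis unfolding t' using fin by (simp only: c_def r_def)
qed

lemma cauchy_schwarz: "cmod (cinner x y) \<le> norm x * norm y"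
proof (cases "y = 0")
  case True then show ?thesis by simp
next
  case False
  have "Re (cinner (x - (cinner x y / cinner y y) *\<^sub>C y) (x - (cinner x y / cinner y y) *\<^sub>C y)) \<ge> 0"
    by (rule cinner_self_nonneg)
  then have "(cmod (cinner x y))\<^sup>2 / (norm y)\<^sup>2 \<le> (norm x)\<^sup>2"
    using expand_sq[OF False, of x] by simp
  then have "(cmod (cinner x y))\<^sup>2 \<le> (norm x)\<^sup>2 * (norm y)\<^sup>2"
    using False by (simp add: field_simps)
  then have "(cmod (cinner x y))\<^sup>2 \<le> (norm x * norm y)\<^sup>2" by (simp add: power_mult_distrib)
  then show ?thesis by (meson norm_ge_zero power2_le_imp_le mult_nonneg_nonneg)
qed

lemma parallelogram: fixes a b :: "'a::complex_inner" shows "(norm (a + b))\<^sup>2 + (norm (a - b))\<^sup>2 = 2 * (norm a)\<^sup>2 + 2 * (norm b)\<^sup>2"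
proof -
  have "cinner (a + b) (a + b) + cinner (a - b) (a - b) = 2 * cinner a a + 2 * cinner b b"
    by (simp add: cinner_add_left cinner_add_right cinner_diff_left cinner_diff_right)
  then have "complex_of_real ((norm (a + b))\<^sup>2 + (norm (a - b))\<^sup>2) = complex_of_real (2 * (norm a)\<^sup>2 + 2 * (norm b)\<^sup>2)"
    by (simp add: cinner_self_norm)
  then show ?thesis using of_real_eq_iff by blast
qed

lemma continuous_cinner_left: "continuous_on UNIV (\<lambda>y. cinner y x)"
proof -
  have "\<forall>a b. dist (cinner a x) (cinner b x) \<le> (norm x + 1) * dist a b"
  proof (intro allI)
    fix a b
    have "dist (cinner a x) (cinner b x) = cmod (cinner (a - b) x)"
      by (simp add: dist_norm cinner_diff_left)
    also have "\<dots> \<le> norm (a - b) * norm x" by (rule cauchy_schwarz)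
    also have "\<dots> \<le> (norm x + 1) * dist a b" by (simp add: dist_norm mult_right_mono mult.commute)
    finally show "dist (cinner a x) (cinner b x) \<le> (norm x + 1) * dist a b" .
  qed
  then show ?thesis
    by (intro lipschitz_on_continuous_on[of "norm x + 1"] lipschitz_onI) auto
qed

lemma projection:
  fixes x :: "'a::chilbert_space"
  assumes N: "closed N" "0 \<in> N" "\<forall>a\<in>N. \<forall>b\<in>N. a + b \<in> N" "\<forall>c. \<forall>a\<in>N. c *\<^sub>C a \<in> N"
  shows "\<exists>p\<in>N. \<forall>n\<in>N. cinner (x - p) n = 0"
proof -
  define D where "D = (\<lambda>n. norm (x - n)) ` N"
  define d where "d = Inf D"
  have bdd: "bdd_below D" unfolding D_def by (rule bdd_belowI[of _ 0]) auto
  have Dne: "D \<noteq> {}" using N(2) by (auto simp: D_def)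
  have dle: "\<forall>q\<in>N. d \<le> norm (x - q)"
    unfolding d_def D_def using bdd[unfolded D_def] by (auto intro: cInf_lower)
  have d0': "0 \<le> d" unfolding d_def using Dne by (intro cInf_greatest) (auto simp: D_def)
  have ex: "\<exists>n\<in>N. (norm (x - n))\<^sup>2 < d\<^sup>2 + 1 / real (Suc m)" for m
  proof -
    have "d < sqrt (d\<^sup>2 + 1 / real (Suc m))"
      by (intro real_less_rsqrt) simp
    then obtain v where "v \<in> D" "v < sqrt (d\<^sup>2 + 1 / real (Suc m))"
      using cInf_less_iff[OF Dne bdd] unfolding d_def by blast
    then obtain n where n: "n \<in> N" "norm (x - n) < sqrt (d\<^sup>2 + 1 / real (Suc m))"
      by (auto simp: D_def)
    then have "(norm (x - n))\<^sup>2 < (sqrt (d\<^sup>2 + 1 / real (Suc m)))\<^sup>2"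
      by (intro power_strict_mono) auto
    then have "(norm (x - n))\<^sup>2 < d\<^sup>2 + 1 / real (Suc m)"
      by (simp add: add_nonneg_nonneg)
    with n show ?thesis by blast
  qed
  then obtain s where s: "\<And>m. s m \<in> N" "\<And>m. (norm (x - s m))\<^sup>2 < d\<^sup>2 + 1 / real (Suc m)"
    by metis
  have half: "\<forall>a\<in>N. \<forall>b\<in>N. scaleR (1/2) (a + b) \<in> N"
    using N(3,4) by (simp add: scaleR_scaleC)
  have cau_bound: "(norm (s i - s j))\<^sup>2 \<le> 2 / real (Suc i) + 2 / real (Suc j)" for i j
  proof -
    define a where "a = x - s i"
    define b where "b = x - s j"
    have ab: "a + b = scaleR 2 (x - scaleR (1/2) (s i + s j))"
      by (simp add: a_def b_def scaleR_diff_right scaleR_add_right scaleR_2)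
    have "d \<le> norm (x - scaleR (1/2) (s i + s j))" using dle half s(1) by blast
    then have "2 * d \<le> norm (a + b)" by (simp add: ab)
    then have "(2 * d)\<^sup>2 \<le> (norm (a + b))\<^sup>2" using d0' by (intro power_mono) auto
    moreover have "a - b = s j - s i" by (simp add: a_def b_def)
    moreover have "norm (s j - s i) = norm (s i - s j)" by (rule norm_minus_commute)
    ultimately show ?thesis using parallelogram[of a b] s(2)[of i] s(2)[of j]
      by (simp add: a_def b_def power_mult_distrib)
  qed
  have "Cauchy s"
  proof (rule CauchyI)
    fix e :: real assume e: "0 < e"
    then have "0 < e\<^sup>2 / 4" by simp
    then obtain M where M: "inverse (real (Suc M)) < e\<^sup>2 / 4" using reals_Archimedean by blast
    show "\<exists>M. \<forall>m\<ge>M. \<forall>n\<ge>M. norm (s m - s n) < e"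
    proof (intro exI allI impI)
      fix m n assume mn: "M \<le> m" "M \<le> n"
      have "2 / real (Suc m) \<le> 2 / real (Suc M)" "2 / real (Suc n) \<le> 2 / real (Suc M)"
        using mn by (simp_all add: frac_le)
      moreover have "4 / real (Suc M) < e\<^sup>2"
        using M by (simp add: inverse_eq_divide field_simps)
      ultimately have "(norm (s m - s n))\<^sup>2 < e\<^sup>2"
        using cau_bound[of m n] by linarith
      then show "norm (s m - s n) < e" using e by (simp add: power_less_imp_less_base)
    qed
  qed
  then obtain p where p: "s \<longlonglongrightarrow> p" using Cauchy_convergent convergent_def by blast
  have pN: "p \<in> N" using closed_sequentially[OF N(1) s(1) p] .
  have lim1: "(\<lambda>m. (norm (x - s m))\<^sup>2) \<longlonglongrightarrow> (norm (x - p))\<^sup>2"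
    by (intro tendsto_intros p)
  have lim2: "(\<lambda>m. d\<^sup>2 + 1 / real (Suc m)) \<longlonglongrightarrow> d\<^sup>2 + 0"
    by (intro tendsto_intros LIMSEQ_inverse_real_of_nat[unfolded inverse_eq_divide])
  have "(norm (x - p))\<^sup>2 \<le> d\<^sup>2 + 0"
    by (rule LIMSEQ_le[OF lim1 lim2]) (use s(2) less_imp_le in blast)
  then have "(norm (x - p))\<^sup>2 \<le> d\<^sup>2" by simp
  then have pmin: "norm (x - p) \<le> d" using power2_le_imp_le d0' by blast
  show ?thesis
  proof (intro bexI[OF _ pN] ballI)
    fix n assume nN: "n \<in> N"
    show "cinner (x - p) n = 0"
    proof (cases "n = 0")
      case True then show ?thesis by simp
    next
      case False
      define e where "e = x - p"
      define t where "t = cinner e n / cinner n n"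
      have qN: "p + t *\<^sub>C n \<in> N" using N(3,4) pN nN by blast
      have "x - (p + t *\<^sub>C n) = e - t *\<^sub>C n" by (simp add: e_def)
      then have "norm e \<le> norm (e - t *\<^sub>C n)"
        using dle qN pmin by (metis e_def order_trans)
      then have "(norm e)\<^sup>2 \<le> (norm (e - t *\<^sub>C n))\<^sup>2" by (simp add: power_mono)
      also have "(norm (e - t *\<^sub>C n))\<^sup>2 = (norm e)\<^sup>2 - (cmod (cinner e n))\<^sup>2 / (norm n)\<^sup>2"
      proof -
        have "cinner (e - t *\<^sub>C n) (e - t *\<^sub>C n) = complex_of_real ((norm e)\<^sup>2 - (cmod (cinner e n))\<^sup>2 / (norm n)\<^sup>2)"
          using expand_sq[OF False, of e] unfolding t_def .
        then have "complex_of_real ((norm (e - t *\<^sub>C n))\<^sup>2) = complex_of_real ((norm e)\<^sup>2 - (cmod (cinner e n))\<^sup>2 / (norm n)\<^sup>2)"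
          by (simp only: cinner_self_norm)
        then show ?thesis using of_real_eq_iff by blast
      qed
      finally have "(cmod (cinner e n))\<^sup>2 / (norm n)\<^sup>2 \<le> 0" by simp
      then have "(cmod (cinner e n))\<^sup>2 \<le> 0" using False by (simp add: divide_le_0_iff)
      then show ?thesis by (simp add: e_def)
    qed
  qed
qed

lemma riesz:
  fixes \<phi> :: "'a::chilbert_space \<Rightarrow> complex"
  assumes add: "\<And>a b. \<phi> (a + b) = \<phi> a + \<phi> b"
    and sc: "\<And>c a. \<phi> (c *\<^sub>C a) = c * \<phi> a"
    and bd: "\<And>a. cmod (\<phi> a) \<le> K * norm a"
  shows "\<exists>k. \<forall>y. \<phi> y = cinner y k"
proof (cases "\<forall>y. \<phi> y = 0")
  case True then show ?thesis by (intro exI[of _ 0]) simp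
next
  case False
  then obtain y0 where y0: "\<phi> y0 \<noteq> 0" by blast
  have phi0: "\<phi> 0 = 0" using add[of 0 0] by simp
  have diff: "\<phi> (a - b) = \<phi> a - \<phi> b" for a b
    using add[of a "(-1) *\<^sub>C b"] sc[of "-1" b] by (simp add: uminus_scaleC[symmetric])
  have K: "0 \<le> K"
  proof (rule ccontr)
    assume "\<not> 0 \<le> K"
    then have "K * norm y0 \<le> 0" by (simp add: mult_nonpos_nonneg)
    then have "cmod (\<phi> y0) \<le> 0" using bd[of y0] by linarith
    then show False using y0 by simp
  qed
  have cont: "continuous_on UNIV \<phi>"
    by (intro lipschitz_on_continuous_on[of K] lipschitz_onI)
       (use K in \<open>auto simp: dist_norm diff[symmetric] bd\<close>)
  define N where "N = {y. \<phi> y = 0}"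
  have closedN: "closed N" unfolding N_def
    by (rule closed_Collect_eq[OF cont continuous_on_const])
  have "0 \<in> N" "\<forall>a\<in>N. \<forall>b\<in>N. a + b \<in> N" "\<forall>c. \<forall>a\<in>N. c *\<^sub>C a \<in> N"
    by (auto simp: N_def phi0 add sc)
  then obtain p where pN: "p \<in> N" and orth: "\<forall>n\<in>N. cinner (y0 - p) n = 0"
    using projection[OF closedN] by blast
  define e where "e = y0 - p"
  have phie: "\<phi> e \<noteq> 0" using pN y0 by (simp add: e_def diff N_def)
  have e0: "e \<noteq> 0" using phie phi0 by auto
  have ee: "cinner e e \<noteq> 0" using e0 cinner_self_eq_zero by blast
  have eer: "cnj (cinner e e) = cinner e e" using cinner_commute[of e e] by simp
  show ?thesis
  proof (intro exI allI)
    fix y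
    define c where "c = \<phi> y / \<phi> e"
    have "y - c *\<^sub>C e \<in> N" using phie by (simp add: N_def diff sc c_def)
    then have "cinner e (y - c *\<^sub>C e) = 0" using orth by (simp add: e_def)
    then have "cinner e y = cnj c * cinner e e" by (simp add: cinner_diff_right cinner_scaleC_right)
    then have "cinner y e = c * cinner e e"
      using cinner_commute[of y e] eer by (metis complex_cnj_cnj complex_cnj_mult)
    then show "\<phi> y = cinner y (cnj (\<phi> e / cinner e e) *\<^sub>C e)"
      using ee phie by (simp add: cinner_scaleC_right c_def field_simps)
  qed
qed



lemma linrel_add: "linrel A \<Longrightarrow> (x,y)\<in>A \<Longrightarrow> (u,v)\<in>A \<Longrightarrow> (x+u,y+v)\<in>A"
  unfolding linrel_def by blast
lemma linrel_scale: "linrel A \<Longrightarrow> (x,y)\<in>A \<Longrightarrow> (c *\<^sub>C x, c *\<^sub>C y)\<in>A"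
  unfolding linrel_def by blast
lemma linrel_zero: "linrel A \<Longrightarrow> (0,0)\<in>A"
  unfolding linrel_def by blast
lemma linrel_diff:
  assumes "linrel A" "(x,y)\<in>A" "(u,v)\<in>A" shows "(x-u,y-v)\<in>A"
proof -
  have "((-1) *\<^sub>C u, (-1) *\<^sub>C v) \<in> A" using linrel_scale[OF assms(1,3)] .
  then have "(x + (-1) *\<^sub>C u, y + (-1) *\<^sub>C v) \<in> A" using linrel_add[OF assms(1,2)] by blast
  then show ?thesis by (simp only: uminus_scaleC[symmetric] diff_conv_add_uminus)
qed
lemma linop_linrel: "linop A \<Longrightarrow> linrel A"
  unfolding linop_def by blast
lemma linop_unique:
  assumes "linop A" "(x,y)\<in>A" "(x,y')\<in>A" shows "y = y'"
proof -
  have "(x - x, y - y') \<in> A" using linrel_diff[OF linop_linrel[OF assms(1)] assms(2,3)] .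
  then have "(0, y - y') \<in> A" by simp
  then have "y - y' = 0" using assms(1) unfolding linop_def by blast
  then show ?thesis by simp
qed
lemma opapp_eq: "(x,y)\<in>A \<Longrightarrow> (\<And>y'. (x,y')\<in>A \<Longrightarrow> y' = y) \<Longrightarrow> opapp A x = y"
  unfolding opapp_def by (rule the_equality) blast+

lemma dom_add: "linrel A \<Longrightarrow> x \<in> Domain A \<Longrightarrow> u \<in> Domain A \<Longrightarrow> x + u \<in> Domain A"
  by (elim DomainE) (rule DomainI, rule linrel_add)
lemma dom_scale: "linrel A \<Longrightarrow> x \<in> Domain A \<Longrightarrow> c *\<^sub>C x \<in> Domain A"
  by (elim DomainE) (rule DomainI, rule linrel_scale)
lemma dom_zero: "linrel A \<Longrightarrow> 0 \<in> Domain A"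
  by (rule DomainI, rule linrel_zero)

lemma lin_add: "linear_on D F \<Longrightarrow> x \<in> D \<Longrightarrow> y \<in> D \<Longrightarrow> F (x + y) = F x + F y"
  unfolding linear_on_def by blast
lemma lin_scale: "linear_on D F \<Longrightarrow> x \<in> D \<Longrightarrow> F (c *\<^sub>C x) = c *\<^sub>C F x"
  unfolding linear_on_def by blast
lemma lin_zero: "linear_on D F \<Longrightarrow> 0 \<in> D \<Longrightarrow> F 0 = 0"
  using lin_add[of D F 0 0] by simp
lemma lin_diff:
  assumes "linear_on D F" "x \<in> D" "y \<in> D" "(-1) *\<^sub>C y \<in> D"
  shows "F (x - y) = F x - F y"
proof -
  have "F (x + (-1) *\<^sub>C y) = F x + (-1) *\<^sub>C F y"
    using lin_add[OF assms(1,2,4)] lin_scale[OF assms(1,3)] by simp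
  then show ?thesis by (simp only: uminus_scaleC[symmetric] diff_conv_add_uminus)
qed

lemma shift_iff: "(x,y) \<in> shift A z \<longleftrightarrow> (x, y + z *\<^sub>C x) \<in> A"
proof
  assume "(x,y) \<in> shift A z"
  then obtain x' y' where "(x,y) = (x', y' - z *\<^sub>C x')" "(x',y')\<in>A" unfolding shift_def by blast
  then show "(x, y + z *\<^sub>C x) \<in> A" by simp
next
  assume "(x, y + z *\<^sub>C x) \<in> A"
  then have "(x, (y + z *\<^sub>C x) - z *\<^sub>C x) \<in> shift A z" unfolding shift_def by blast
  then show "(x,y) \<in> shift A z" by simp
qed
lemma A0_iff: "(f,k) \<in> A0 T \<Gamma>0 \<longleftrightarrow> (f,k)\<in>T \<and> \<Gamma>0 f = 0"
  unfolding A0_def by blast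
lemma kerT_iff: "u \<in> kerT T z \<longleftrightarrow> (u, z *\<^sub>C u) \<in> T"
  unfolding kerT_def by blast
lemma gamma_iff: "(p, u) \<in> gamma_field T \<Gamma>0 z \<longleftrightarrow> u \<in> kerT T z \<and> p = \<Gamma>0 u"
  unfolding gamma_field_def by blast
lemma weyl_iff: "(p,q) \<in> weyl T \<Gamma>0 \<Gamma>1 z \<longleftrightarrow> (\<exists>u. u \<in> kerT T z \<and> p = \<Gamma>0 u \<and> q = \<Gamma>1 u)"
  unfolding weyl_def gamma_field_def by blast
lemma ext_iff: "(f,k)\<in>ext_op T \<Gamma>0 \<Gamma>1 B1 B2 \<longleftrightarrow> (f,k)\<in>T \<and> (\<exists>m. (\<Gamma>1 f, m)\<in>B2 \<and> (m, \<Gamma>0 f)\<in>B1)"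
  unfolding ext_op_def by blast
lemma idm_iff: "(x, w) \<in> id_minus C \<longleftrightarrow> (\<exists>y. (x,y)\<in>C \<and> w = x - y)"
  unfolding id_minus_def by blast
lemma opsum_iff: "(x, w) \<in> opsum A B \<longleftrightarrow> (\<exists>y z. (x,y)\<in>A \<and> (x,z)\<in>B \<and> w = y + z)"
  unfolding opsum_def by blast
lemma adj_iff: "(y,x) \<in> adj A \<longleftrightarrow> (\<forall>u v. (u,v)\<in>A \<longrightarrow> cinner v y = cinner u x)"
  unfolding adj_def by blast
lemma ps_iff: "z \<in> point_spectrum A \<longleftrightarrow> (\<exists>x. x \<noteq> 0 \<and> (x, z *\<^sub>C x) \<in> A)"
  unfolding point_spectrum_def by blast



lemma part_i:
  fixes T Tt :: "('h::chilbert_space \<times> 'h) set"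
    and \<Gamma>0 \<Gamma>1 \<Gamma>t0 \<Gamma>t1 :: "'h \<Rightarrow> 'g::chilbert_space"
    and B1 B2 :: "('g \<times> 'g) set"
    and z :: complex
  assumes T: "linop T" and Tt: "linrel Tt"
    and G0: "linear_on (Domain T) \<Gamma>0" and G1: "linear_on (Domain T) \<Gamma>1"
    and Gt0: "linear_on (Domain Tt) \<Gamma>t0"
    and green: "\<forall>f k g l. (f, k) \<in> T \<longrightarrow> (g, l) \<in> Tt \<longrightarrow>
        cinner k g - cinner f l = cinner (\<Gamma>1 f) (\<Gamma>t0 g) - cinner (\<Gamma>0 f) (\<Gamma>t1 g)"
    and dense: "closure (\<Gamma>t0 ` Domain Tt) = UNIV"
    and Madj: "adj (A0 T \<Gamma>0) = A0 Tt \<Gamma>t0"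
    and lam: "z \<in> resolvent_set (A0 T \<Gamma>0)"
    and B1: "linop B1" and B2: "linop B2"
  shows
   "(z \<notin> point_spectrum (ext_op T \<Gamma>0 \<Gamma>1 B1 B2) \<longrightarrow>
      (\<forall>f. f \<in> Domain (adj (gamma_field Tt \<Gamma>t0 (cnj z)) O B2) \<and>
           f \<in> Domain (adj (gamma_field Tt \<Gamma>t0 (cnj z)) O B2
                   O converse (id_minus (B1 O weyl T \<Gamma>0 \<Gamma>1 z O B2))) \<longrightarrow>
         f \<in> Range (shift (ext_op T \<Gamma>0 \<Gamma>1 B1 B2) z) \<and>
         opapp (converse (shift (ext_op T \<Gamma>0 \<Gamma>1 B1 B2) z)) f =
         opapp (opsum (converse (shift (A0 T \<Gamma>0) z))
                      (adj (gamma_field Tt \<Gamma>t0 (cnj z)) O B2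
                        O converse (id_minus (B1 O weyl T \<Gamma>0 \<Gamma>1 z O B2))
                        O B1 O gamma_field T \<Gamma>0 z)) f) \<and>
      ((\<forall>f. f \<in> Domain (adj (gamma_field Tt \<Gamma>t0 (cnj z)) O B2) \<and>
           f \<in> Domain (adj (gamma_field Tt \<Gamma>t0 (cnj z)) O B2
                   O converse (id_minus (B1 O weyl T \<Gamma>0 \<Gamma>1 z O B2)))) \<longrightarrow>
         bij_betw (opapp (shift (ext_op T \<Gamma>0 \<Gamma>1 B1 B2) z))
                  (Domain (ext_op T \<Gamma>0 \<Gamma>1 B1 B2)) UNIV))"
proof -
  define A where "A = A0 T \<Gamma>0"
  define E where "E = ext_op T \<Gamma>0 \<Gamma>1 B1 B2"
  define R where "R = converse (shift A z)"
  define gt where "gt = gamma_field Tt \<Gamma>t0 (cnj z)"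
  define C where "C = B1 O weyl T \<Gamma>0 \<Gamma>1 z O B2"
  have TL: "linrel T" using T by (rule linop_linrel)
  have B1L: "linrel B1" using B1 by (rule linop_linrel)
  have B2L: "linrel B2" using B2 by (rule linop_linrel)
  have Rlin: "linop R" and Rsurj: "Range (shift A z) = UNIV"
    and Rbd: "\<exists>K. \<forall>x y. (x, y) \<in> shift A z \<longrightarrow> norm x \<le> K * norm y"
    using lam unfolding resolvent_set_def R_def A_def by blast+
  have RL: "linrel R" using Rlin by (rule linop_linrel)
  obtain K where K: "\<And>x y. (x, y) \<in> shift A z \<Longrightarrow> norm x \<le> K * norm y" using Rbd by blast
  have DT: "\<And>x. x \<in> Domain T \<Longrightarrow> (-1) *\<^sub>C x \<in> Domain T" using dom_scale[OF TL] by blast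
  have DTt: "\<And>x. x \<in> Domain Tt \<Longrightarrow> (-1) *\<^sub>C x \<in> Domain Tt" using dom_scale[OF Tt] by blast
  define Rf where "Rf y = opapp R y" for y
  have Rf_in: "(y, Rf y) \<in> R" for y
  proof -
    obtain x where "(x, y) \<in> shift A z" using Rsurj by blast
    then have xy: "(y, x) \<in> R" by (simp add: R_def)
    have "Rf y = x" unfolding Rf_def using linop_unique[OF Rlin xy] by (intro opapp_eq[OF xy]) simp
    then show ?thesis using xy by simp
  qed
  have Rf_eq: "(y, x) \<in> R \<Longrightarrow> Rf y = x" for x y using linop_unique[OF Rlin _ Rf_in] by blast
  have RfA: "(Rf y, y + z *\<^sub>C Rf y) \<in> A" for y using Rf_in[of y] by (simp add: R_def shift_iff)
  have Rf_add: "Rf (a + b) = Rf a + Rf b" for a b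
    using Rf_eq linrel_add[OF RL Rf_in[of a] Rf_in[of b]] by blast
  have Rf_sc: "Rf (c *\<^sub>C a) = c *\<^sub>C Rf a" for c a
    using Rf_eq linrel_scale[OF RL Rf_in[of a]] by blast
  have Rf_bd: "norm (Rf y) \<le> K * norm y" for y
    using K Rf_in[of y] by (simp add: R_def)
  \<comment> \<open>surjectivity of the adjoint minus conj z, via Riesz\<close>
  have surjt: "\<exists>k. (k, w + cnj z *\<^sub>C k) \<in> A0 Tt \<Gamma>t0" for w
  proof -
    have "\<exists>k. \<forall>y. cinner (Rf y) w = cinner y k"
    proof (rule riesz)
      show "cinner (Rf (a + b)) w = cinner (Rf a) w + cinner (Rf b) w" for a b
        by (simp add: Rf_add cinner_add_left)
      show "cinner (Rf (c *\<^sub>C a)) w = c * cinner (Rf a) w" for c a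
        by (simp add: Rf_sc cinner_scaleC_left)
      show "cmod (cinner (Rf a) w) \<le> (K * norm w) * norm a" for a
      proof -
        have "cmod (cinner (Rf a) w) \<le> norm (Rf a) * norm w" by (rule cauchy_schwarz)
        also have "\<dots> \<le> (K * norm a) * norm w" by (rule mult_right_mono[OF Rf_bd]) simp
        finally show ?thesis by (simp add: algebra_simps)
      qed
    qed
    then obtain k where k: "\<And>y. cinner (Rf y) w = cinner y k" by blast
    have "(k, w + cnj z *\<^sub>C k) \<in> adj A"
      unfolding adj_iff
    proof (intro allI impI)
      fix u v assume uv: "(u, v) \<in> A"
      define y where "y = v - z *\<^sub>C u"
      have "(y, u) \<in> R" unfolding R_def y_def using uv by (simp add: shift_iff)
      then have Ru: "Rf y = u" by (rule Rf_eq)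
      have v: "v = y + z *\<^sub>C u" by (simp add: y_def)
      have "cinner v k = cinner y k + z * cinner u k" by (simp add: v cinner_add_left cinner_scaleC_left)
      also have "\<dots> = cinner u w + z * cinner u k" using k[of y] Ru by simp
      also have "\<dots> = cinner u (w + cnj z *\<^sub>C k)" by (simp add: cinner_add_right cinner_scaleC_right)
      finally show "cinner v k = cinner u (w + cnj z *\<^sub>C k)" .
    qed
    then show ?thesis using Madj by (auto simp: A_def)
  qed
  have decomp: "\<Gamma>t0 g \<in> \<Gamma>t0 ` kerT Tt (cnj z)" if g: "g \<in> Domain Tt" for g
  proof -
    obtain l where gl: "(g, l) \<in> Tt" using g by blast
    obtain k where k: "(k, (l - cnj z *\<^sub>C g) + cnj z *\<^sub>C k) \<in> A0 Tt \<Gamma>t0" using surjt by blast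
    have kT: "(k, (l - cnj z *\<^sub>C g) + cnj z *\<^sub>C k) \<in> Tt" and k0: "\<Gamma>t0 k = 0" using k by (simp_all add: A0_iff)
    have "(g - k, l - ((l - cnj z *\<^sub>C g) + cnj z *\<^sub>C k)) \<in> Tt" by (rule linrel_diff[OF Tt gl kT])
    moreover have "l - ((l - cnj z *\<^sub>C g) + cnj z *\<^sub>C k) = cnj z *\<^sub>C (g - k)"
      by (simp add: scaleC_diff_right)
    ultimately have "g - k \<in> kerT Tt (cnj z)" by (simp add: kerT_iff)
    moreover have "\<Gamma>t0 (g - k) = \<Gamma>t0 g"
    proof -
      have kD: "k \<in> Domain Tt" using kT by blast
      show ?thesis using lin_diff[OF Gt0 g kD DTt[OF kD]] k0 by simp
    qed
    ultimately show ?thesis by (metis image_eqI)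
  qed
  have orth: "x = 0" if x: "\<forall>v\<in>kerT Tt (cnj z). cinner (\<Gamma>t0 v) x = 0" for x
  proof -
    have "\<Gamma>t0 ` Domain Tt \<subseteq> {a. cinner a x = 0}"
    proof
      fix a assume "a \<in> \<Gamma>t0 ` Domain Tt"
      then obtain g where g: "g \<in> Domain Tt" "a = \<Gamma>t0 g" by blast
      then obtain v where "v \<in> kerT Tt (cnj z)" "a = \<Gamma>t0 v" using decomp by blast
      then show "a \<in> {a. cinner a x = 0}" using x by simp
    qed
    moreover have "closed {a. cinner a x = 0}"
      by (rule closed_Collect_eq[OF continuous_cinner_left continuous_on_const])
    ultimately have "closure (\<Gamma>t0 ` Domain Tt) \<subseteq> {a. cinner a x = 0}" by (rule closure_minimal)
    then have "cinner x x = 0" using dense by blast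
    then show ?thesis by (simp add: cinner_self_eq_zero)
  qed
  have adj_uniq: "y1 = y2" if "(f, y1) \<in> adj gt" "(f, y2) \<in> adj gt" for f y1 y2
  proof -
    have "\<forall>v\<in>kerT Tt (cnj z). cinner (\<Gamma>t0 v) (y1 - y2) = 0"
    proof
      fix v assume v: "v \<in> kerT Tt (cnj z)"
      then have "(\<Gamma>t0 v, v) \<in> gt" by (simp add: gt_def gamma_iff)
      then have "cinner v f = cinner (\<Gamma>t0 v) y1" "cinner v f = cinner (\<Gamma>t0 v) y2"
        using that unfolding adj_iff by blast+
      then show "cinner (\<Gamma>t0 v) (y1 - y2) = 0" by (simp add: cinner_diff_right)
    qed
    then have "y1 - y2 = 0" by (rule orth)
    then show ?thesis by simp
  qed
  have gamma1: "(f, \<Gamma>1 (Rf f)) \<in> adj gt" for f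
    unfolding adj_iff
  proof (intro allI impI)
    fix u v assume "(u, v) \<in> gt"
    then have v: "(v, cnj z *\<^sub>C v) \<in> Tt" and u: "u = \<Gamma>t0 v" by (simp_all add: gt_def gamma_iff kerT_iff)
    have kA: "(Rf f, f + z *\<^sub>C Rf f) \<in> T" "\<Gamma>0 (Rf f) = 0" using RfA[of f] by (simp_all add: A_def A0_iff)
    have "cinner (f + z *\<^sub>C Rf f) v - cinner (Rf f) (cnj z *\<^sub>C v)
        = cinner (\<Gamma>1 (Rf f)) (\<Gamma>t0 v) - cinner (\<Gamma>0 (Rf f)) (\<Gamma>t1 v)"
      using green kA(1) v by blast
    then have "cinner f v = cinner (\<Gamma>1 (Rf f)) (\<Gamma>t0 v)"
      by (simp add: kA(2) cinner_add_left cinner_scaleC_left cinner_scaleC_right)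
    then have "cnj (cinner f v) = cnj (cinner (\<Gamma>1 (Rf f)) (\<Gamma>t0 v))" by simp
    then show "cinner v f = cinner u (\<Gamma>1 (Rf f))"
      using cinner_commute[of v f] cinner_commute[of u "\<Gamma>1 (Rf f)"] u by simp
  qed
  have gam_inj: "u1 = u2" if "(p, u1) \<in> gamma_field T \<Gamma>0 z" "(p, u2) \<in> gamma_field T \<Gamma>0 z" for p u1 u2
  proof -
    have u: "(u1, z *\<^sub>C u1) \<in> T" "(u2, z *\<^sub>C u2) \<in> T" "p = \<Gamma>0 u1" "p = \<Gamma>0 u2"
      using that by (simp_all add: gamma_iff kerT_iff)
    have "(u1 - u2, z *\<^sub>C u1 - z *\<^sub>C u2) \<in> T" by (rule linrel_diff[OF TL u(1,2)])
    then have d: "(u1 - u2, z *\<^sub>C (u1 - u2)) \<in> T" by (simp add: scaleC_diff_right)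
    have D: "u1 \<in> Domain T" "u2 \<in> Domain T" using u by blast+
    have "\<Gamma>0 (u1 - u2) = 0" using lin_diff[OF G0 D DT[OF D(2)]] u(3,4) by simp
    with d have "(u1 - u2, 0 + z *\<^sub>C (u1 - u2)) \<in> A" by (simp add: A_def A0_iff)
    then have "(u1 - u2, 0) \<in> shift A z" by (simp only: shift_iff)
    then have "(0, u1 - u2) \<in> R" by (simp add: R_def)
    then have "u1 - u2 = 0" using Rlin unfolding linop_def by blast
    then show ?thesis by simp
  qed
  have Ediff: "(x1 - x2, y1 - y2) \<in> E" if "(x1, y1) \<in> E" "(x2, y2) \<in> E" for x1 x2 y1 y2
  proof -
    note xy = that
    obtain m1 m2 where m: "(x1, y1) \<in> T" "(\<Gamma>1 x1, m1) \<in> B2" "(m1, \<Gamma>0 x1) \<in> B1"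
      "(x2, y2) \<in> T" "(\<Gamma>1 x2, m2) \<in> B2" "(m2, \<Gamma>0 x2) \<in> B1"
      using xy unfolding E_def ext_iff by blast
    have D: "x1 \<in> Domain T" "x2 \<in> Domain T" using m by blast+
    have "(\<Gamma>1 x1 - \<Gamma>1 x2, m1 - m2) \<in> B2" by (rule linrel_diff[OF B2L m(2,5)])
    moreover have "(m1 - m2, \<Gamma>0 x1 - \<Gamma>0 x2) \<in> B1" by (rule linrel_diff[OF B1L m(3,6)])
    moreover have "(x1 - x2, y1 - y2) \<in> T" by (rule linrel_diff[OF TL m(1,4)])
    moreover have "\<Gamma>1 (x1 - x2) = \<Gamma>1 x1 - \<Gamma>1 x2" "\<Gamma>0 (x1 - x2) = \<Gamma>0 x1 - \<Gamma>0 x2"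
      using lin_diff[OF G1 D DT[OF D(2)]] lin_diff[OF G0 D DT[OF D(2)]] by simp_all
    ultimately show ?thesis unfolding E_def ext_iff by auto
  qed
  have ET: "E \<subseteq> T" unfolding E_def ext_op_def by blast
  have shiftE_uniq: "a = b" if "(x, a) \<in> shift E z" "(x, b) \<in> shift E z" for x a b
  proof -
    have "(x, a + z *\<^sub>C x) \<in> T" "(x, b + z *\<^sub>C x) \<in> T" using that ET by (auto simp: shift_iff)
    then have "a + z *\<^sub>C x = b + z *\<^sub>C x" by (rule linop_unique[OF T])
    then show ?thesis by simp
  qed
  have uniqE: "x1 = x2" if nps: "z \<notin> point_spectrum E" and "(x1, f) \<in> shift E z" "(x2, f) \<in> shift E z" for x1 x2 f
  proof -
    have "(x1, f + z *\<^sub>C x1) \<in> E" "(x2, f + z *\<^sub>C x2) \<in> E" using that(2,3) by (simp_all add: shift_iff)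
    from Ediff[OF this] have "(x1 - x2, z *\<^sub>C (x1 - x2)) \<in> E" by (simp add: scaleC_diff_right)
    then have "x1 - x2 = 0" using nps unfolding ps_iff by blast
    then show ?thesis by simp
  qed
  have C_iff: "(h, c) \<in> C \<longleftrightarrow> (\<exists>u. (h, \<Gamma>0 u) \<in> B1 \<and> u \<in> kerT T z \<and> (\<Gamma>1 u, c) \<in> B2)" for h c
    by (auto simp: C_def relcomp_unfold weyl_iff)
  have C_inj: "h1 = h2" if nps: "z \<notin> point_spectrum E" and "(h1, b) \<in> id_minus C" "(h2, b) \<in> id_minus C" for h1 h2 b
  proof -
    note hh = that(2,3)
    obtain c1 c2 where c: "(h1, c1) \<in> C" "b = h1 - c1" "(h2, c2) \<in> C" "b = h2 - c2"
      using hh unfolding idm_iff by blast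
    obtain u1 u2 where u: "(h1, \<Gamma>0 u1) \<in> B1" "u1 \<in> kerT T z" "(\<Gamma>1 u1, c1) \<in> B2"
      "(h2, \<Gamma>0 u2) \<in> B1" "u2 \<in> kerT T z" "(\<Gamma>1 u2, c2) \<in> B2"
      using c(1,3) unfolding C_iff by blast
    have uT: "(u1, z *\<^sub>C u1) \<in> T" "(u2, z *\<^sub>C u2) \<in> T" using u(2,5) by (simp_all add: kerT_iff)
    have D: "u1 \<in> Domain T" "u2 \<in> Domain T" using uT by blast+
    have hc: "h1 - h2 = c1 - c2" using c(2,4) by (simp add: algebra_simps)
    have "(h1 - h2, \<Gamma>0 u1 - \<Gamma>0 u2) \<in> B1" by (rule linrel_diff[OF B1L u(1,4)])
    then have b1: "(h1 - h2, \<Gamma>0 (u1 - u2)) \<in> B1" using lin_diff[OF G0 D DT[OF D(2)]] by simp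
    have "(\<Gamma>1 u1 - \<Gamma>1 u2, c1 - c2) \<in> B2" by (rule linrel_diff[OF B2L u(3,6)])
    then have b2: "(\<Gamma>1 (u1 - u2), h1 - h2) \<in> B2" using lin_diff[OF G1 D DT[OF D(2)]] hc by simp
    have "(u1 - u2, z *\<^sub>C u1 - z *\<^sub>C u2) \<in> T" by (rule linrel_diff[OF TL uT])
    then have uT': "(u1 - u2, z *\<^sub>C (u1 - u2)) \<in> T" by (simp add: scaleC_diff_right)
    have "(u1 - u2, z *\<^sub>C (u1 - u2)) \<in> E" unfolding E_def ext_iff using uT' b1 b2 by blast
    then have "u1 - u2 = 0" using nps unfolding ps_iff by blast
    then have "\<Gamma>1 (u1 - u2) = 0" using lin_zero[OF G1 dom_zero[OF TL]] by simp
    then have "(0, h1 - h2) \<in> B2" using b2 by simp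
    then have "h1 - h2 = 0" using B2 unfolding linop_def by blast
    then show ?thesis by simp
  qed
  define Q where "Q = adj gt O B2 O converse (id_minus C) O B1 O gamma_field T \<Gamma>0 z"
  have main: "\<exists>g0. (g0, f) \<in> shift E z \<and> (f, g0) \<in> opsum R Q \<and> (\<forall>v. (f, v) \<in> opsum R Q \<longrightarrow> v = g0)"
    if nps: "z \<notin> point_spectrum E" and H: "f \<in> Domain (adj gt O B2 O converse (id_minus C))" for f
  proof -
    obtain y b h where ybh: "(f, y) \<in> adj gt" "(y, b) \<in> B2" "(h, b) \<in> id_minus C"
      using H by blast
    obtain c where c: "(h, c) \<in> C" "b = h - c" using ybh(3) unfolding idm_iff by blast
    obtain u where u: "(h, \<Gamma>0 u) \<in> B1" "u \<in> kerT T z" "(\<Gamma>1 u, c) \<in> B2"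
      using c(1) unfolding C_iff by blast
    define k0 where "k0 = Rf f"
    have y: "y = \<Gamma>1 k0" unfolding k0_def by (rule adj_uniq[OF ybh(1) gamma1])
    have kA: "(k0, f + z *\<^sub>C k0) \<in> T" "\<Gamma>0 k0 = 0" using RfA[of f] by (simp_all add: k0_def A_def A0_iff)
    have uT: "(u, z *\<^sub>C u) \<in> T" using u(2) by (simp add: kerT_iff)
    have D: "k0 \<in> Domain T" "u \<in> Domain T" using kA uT by blast+
    define g0 where "g0 = k0 + u"
    have "(k0 + u, (f + z *\<^sub>C k0) + z *\<^sub>C u) \<in> T" by (rule linrel_add[OF TL kA(1) uT])
    then have g0T: "(g0, f + z *\<^sub>C g0) \<in> T" by (simp add: g0_def scaleC_add_right add.assoc)
    have G0g: "\<Gamma>0 g0 = \<Gamma>0 u" using lin_add[OF G0 D] kA(2) by (simp add: g0_def)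
    have G1g: "\<Gamma>1 g0 = y + \<Gamma>1 u" using lin_add[OF G1 D] y by (simp add: g0_def)
    have "(y + \<Gamma>1 u, b + c) \<in> B2" by (rule linrel_add[OF B2L ybh(2) u(3)])
    then have "(\<Gamma>1 g0, h) \<in> B2" using G1g c(2) by simp
    then have "(g0, f + z *\<^sub>C g0) \<in> E" unfolding E_def ext_iff using g0T u(1) G0g by auto
    then have sh: "(g0, f) \<in> shift E z" by (simp add: shift_iff)
    have gam: "(\<Gamma>0 u, u) \<in> gamma_field T \<Gamma>0 z" using u(2) by (simp add: gamma_iff)
    have "(f, u) \<in> Q" unfolding Q_def
      using ybh(1,2) ybh(3) u(1) gam by blast
    moreover have "(f, k0) \<in> R" unfolding k0_def by (rule Rf_in)
    ultimately have os: "(f, g0) \<in> opsum R Q" unfolding opsum_iff g0_def by blast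
    have un: "v = g0" if v: "(f, v) \<in> opsum R Q" for v
    proof -
      obtain v1 v2 where vv: "(f, v1) \<in> R" "(f, v2) \<in> Q" "v = v1 + v2" using v unfolding opsum_iff by blast
      have v1: "v1 = k0" using Rf_eq[OF vv(1)] by (simp add: k0_def)
      obtain y' b' h' p' where ch: "(f, y') \<in> adj gt" "(y', b') \<in> B2" "(h', b') \<in> id_minus C"
        "(h', p') \<in> B1" "(p', v2) \<in> gamma_field T \<Gamma>0 z"
        using vv(2) unfolding Q_def by blast
      have "y' = y" by (rule adj_uniq[OF ch(1) ybh(1)])
      then have "(y, b') \<in> B2" using ch(2) by simp
      then have "b' = b" using linop_unique[OF B2 _ ybh(2)] by blast
      then have "h' = h" using C_inj[OF nps ch(3)] ybh(3) by simp
      then have "(h, p') \<in> B1" using ch(4) by simp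
      then have "p' = \<Gamma>0 u" using linop_unique[OF B1 _ u(1)] by blast
      then have "v2 = u" using gam_inj[OF ch(5)] gam by simp
      then show ?thesis using vv(3) v1 by (simp add: g0_def)
    qed
    show ?thesis using sh os un by blast
  qed
  have sv: "opapp (shift E z) x = y - z *\<^sub>C x" if "(x, y) \<in> E" for x y
  proof (rule opapp_eq)
    show "(x, y - z *\<^sub>C x) \<in> shift E z" using that by (simp add: shift_iff)
    then show "y' = y - z *\<^sub>C x" if "(x, y') \<in> shift E z" for y'
      using shiftE_uniq that by blast
  qed
  have sv2: "(x, opapp (shift E z) x) \<in> shift E z" if xD: "x \<in> Domain E" for x
  proof -
    obtain y where "(x, y) \<in> E" using xD by blast
    then show ?thesis using sv by (simp add: shift_iff)
  qed
  have P: "f \<in> Range (shift E z) \<and> opapp (converse (shift E z)) f = opapp (opsum R Q) f"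
    if nps: "z \<notin> point_spectrum E" and H: "f \<in> Domain (adj gt O B2 O converse (id_minus C))" for f
  proof -
    obtain g0 where g: "(g0, f) \<in> shift E z" "(f, g0) \<in> opsum R Q" "\<And>v. (f, v) \<in> opsum R Q \<Longrightarrow> v = g0"
      using main[OF nps H] by blast
    have "opapp (converse (shift E z)) f = g0"
    proof (rule opapp_eq)
      show "(f, g0) \<in> converse (shift E z)" using g(1) by simp
      show "y' = g0" if "(f, y') \<in> converse (shift E z)" for y'
        using uniqE[OF nps, of y' f g0] that g(1) by simp
    qed
    moreover have "opapp (opsum R Q) f = g0" by (rule opapp_eq[OF g(2) g(3)])
    moreover have "f \<in> Range (shift E z)" using g(1) by (rule RangeI)
    ultimately show ?thesis by simp
  qed
  have bij: "bij_betw (opapp (shift E z)) (Domain E) UNIV"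
    if nps: "z \<notin> point_spectrum E" and allH: "\<forall>f. f \<in> Domain (adj gt O B2 O converse (id_minus C))"
    unfolding bij_betw_def
  proof
    show "inj_on (opapp (shift E z)) (Domain E)"
    proof (rule inj_onI)
      fix x1 x2 assume x: "x1 \<in> Domain E" "x2 \<in> Domain E" "opapp (shift E z) x1 = opapp (shift E z) x2"
      show "x1 = x2" using uniqE[OF nps sv2[OF x(1)]] sv2[OF x(2)] x(3) by simp
    qed
    have "f \<in> opapp (shift E z) ` Domain E" for f
    proof -
      obtain g0 where g: "(g0, f) \<in> shift E z"
        using main[OF nps allH[rule_format, of f]] by blast
      then have gE: "(g0, f + z *\<^sub>C g0) \<in> E" by (simp add: shift_iff)
      then have "opapp (shift E z) g0 = f" using sv by simp
      then show "f \<in> opapp (shift E z) ` Domain E" using gE by blast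
    qed
    then show "opapp (shift E z) ` Domain E = UNIV" by blast
  qed
  show ?thesis
    unfolding A_def[symmetric] E_def[symmetric] gt_def[symmetric] C_def[symmetric]
    unfolding R_def[symmetric] Q_def[symmetric]
    using P bij by blast
qed


theorem theorem4p4:
  fixes S St T Tt :: "('h::chilbert_space \<times> 'h) set"
    and \<Gamma>0 \<Gamma>1 \<Gamma>t0 \<Gamma>t1 :: "'h \<Rightarrow> 'g::chilbert_space"
    and B1 B2 Bt1 Bt2 :: "('g \<times> 'g) set"
    and z \<mu> :: complex
  assumes sep: "separable_space TYPE('h)"
    and triple: "triple_GDM S St T Tt \<Gamma>0 \<Gamma>1 \<Gamma>t0 \<Gamma>t1"
    and rho_ne: "resolvent_set (A0 T \<Gamma>0) \<noteq> {}"
    and B: "linop B1" "linop B2" "linop Bt1" "linop Bt2"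
    and lam: "z \<in> resolvent_set (A0 T \<Gamma>0)"
    and mu: "\<mu> \<in> resolvent_set (A0 Tt \<Gamma>t0)"
  shows
   "(z \<notin> point_spectrum (ext_op T \<Gamma>0 \<Gamma>1 B1 B2) \<longrightarrow>
      (\<forall>f. f \<in> Domain (adj (gamma_field Tt \<Gamma>t0 (cnj z)) O B2) \<and>
           f \<in> Domain (adj (gamma_field Tt \<Gamma>t0 (cnj z)) O B2
                   O converse (id_minus (B1 O weyl T \<Gamma>0 \<Gamma>1 z O B2))) \<longrightarrow>
         f \<in> Range (shift (ext_op T \<Gamma>0 \<Gamma>1 B1 B2) z) \<and>
         opapp (converse (shift (ext_op T \<Gamma>0 \<Gamma>1 B1 B2) z)) f =
         opapp (opsum (converse (shift (A0 T \<Gamma>0) z))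
                      (adj (gamma_field Tt \<Gamma>t0 (cnj z)) O B2
                        O converse (id_minus (B1 O weyl T \<Gamma>0 \<Gamma>1 z O B2))
                        O B1 O gamma_field T \<Gamma>0 z)) f) \<and>
      ((\<forall>f. f \<in> Domain (adj (gamma_field Tt \<Gamma>t0 (cnj z)) O B2) \<and>
           f \<in> Domain (adj (gamma_field Tt \<Gamma>t0 (cnj z)) O B2
                   O converse (id_minus (B1 O weyl T \<Gamma>0 \<Gamma>1 z O B2)))) \<longrightarrow>
         bij_betw (opapp (shift (ext_op T \<Gamma>0 \<Gamma>1 B1 B2) z))
                  (Domain (ext_op T \<Gamma>0 \<Gamma>1 B1 B2)) UNIV)) \<and>
    (\<mu> \<notin> point_spectrum (ext_op Tt \<Gamma>t0 \<Gamma>t1 Bt1 Bt2) \<longrightarrow>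
      (\<forall>g. g \<in> Domain (adj (gamma_field T \<Gamma>0 (cnj \<mu>)) O Bt2) \<and>
           g \<in> Domain (adj (gamma_field T \<Gamma>0 (cnj \<mu>)) O Bt2
                   O converse (id_minus (Bt1 O weyl Tt \<Gamma>t0 \<Gamma>t1 \<mu> O Bt2))) \<longrightarrow>
         g \<in> Range (shift (ext_op Tt \<Gamma>t0 \<Gamma>t1 Bt1 Bt2) \<mu>) \<and>
         opapp (converse (shift (ext_op Tt \<Gamma>t0 \<Gamma>t1 Bt1 Bt2) \<mu>)) g =
         opapp (opsum (converse (shift (A0 Tt \<Gamma>t0) \<mu>))
                      (adj (gamma_field T \<Gamma>0 (cnj \<mu>)) O Bt2
                        O converse (id_minus (Bt1 O weyl Tt \<Gamma>t0 \<Gamma>t1 \<mu> O Bt2))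
                        O Bt1 O gamma_field Tt \<Gamma>t0 \<mu>)) g) \<and>
      ((\<forall>g. g \<in> Domain (adj (gamma_field T \<Gamma>0 (cnj \<mu>)) O Bt2) \<and>
           g \<in> Domain (adj (gamma_field T \<Gamma>0 (cnj \<mu>)) O Bt2
                   O converse (id_minus (Bt1 O weyl Tt \<Gamma>t0 \<Gamma>t1 \<mu> O Bt2)))) \<longrightarrow>
         bij_betw (opapp (shift (ext_op Tt \<Gamma>t0 \<Gamma>t1 Bt1 Bt2) \<mu>))
                  (Domain (ext_op Tt \<Gamma>t0 \<Gamma>t1 Bt1 Bt2)) UNIV))"
  proof -
  have core: "linop T" "linop Tt"
    and L: "linear_on (Domain T) \<Gamma>0" "linear_on (Domain T) \<Gamma>1"
      "linear_on (Domain Tt) \<Gamma>t0" "linear_on (Domain Tt) \<Gamma>t1"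
    and green: "\<forall>f k g l. (f, k) \<in> T \<longrightarrow> (g, l) \<in> Tt \<longrightarrow>
        cinner k g - cinner f l = cinner (\<Gamma>1 f) (\<Gamma>t0 g) - cinner (\<Gamma>0 f) (\<Gamma>t1 g)"
    and dense: "closure (\<Gamma>0 ` Domain T) = UNIV" "closure (\<Gamma>t0 ` Domain Tt) = UNIV"
    and Madj: "adj (A0 T \<Gamma>0) = A0 Tt \<Gamma>t0" "adj (A0 Tt \<Gamma>t0) = A0 T \<Gamma>0"
    using triple unfolding triple_GDM_def is_core_of_adj_def by blast+
  have cnj_cinner: "cnj (cinner x y) = cinner y x" for x y :: 'h
    using cinner_commute[of y x] by simp
  have cnj_cinner': "cnj (cinner x y) = cinner y x" for x y :: 'g
    using cinner_commute[of y x] by simp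
  have green2: "\<forall>f k g l. (f, k) \<in> Tt \<longrightarrow> (g, l) \<in> T \<longrightarrow>
        cinner k g - cinner f l = cinner (\<Gamma>t1 f) (\<Gamma>0 g) - cinner (\<Gamma>t0 f) (\<Gamma>1 g)"
  proof (intro allI impI)
    fix f k g l assume fk: "(f, k) \<in> Tt" and gl: "(g, l) \<in> T"
    have e: "cinner l f - cinner g k = cinner (\<Gamma>1 g) (\<Gamma>t0 f) - cinner (\<Gamma>0 g) (\<Gamma>t1 f)"
      using green gl fk by blast
    have "cnj (cinner l f - cinner g k) = cnj (cinner (\<Gamma>1 g) (\<Gamma>t0 f) - cinner (\<Gamma>0 g) (\<Gamma>t1 f))"
      using e by simp
    then have "cinner f l - cinner k g = cinner (\<Gamma>t0 f) (\<Gamma>1 g) - cinner (\<Gamma>t1 f) (\<Gamma>0 g)"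
      by (simp only: complex_cnj_diff cnj_cinner cnj_cinner')
    then show "cinner k g - cinner f l = cinner (\<Gamma>t1 f) (\<Gamma>0 g) - cinner (\<Gamma>t0 f) (\<Gamma>1 g)"
      by (metis minus_diff_eq)
  qed
  show ?thesis
    apply (rule conjI)
     apply (rule part_i[OF core(1) linop_linrel[OF core(2)] L(1,2,3) green dense(2) Madj(1) lam B(1,2)])
    apply (rule part_i[OF core(2) linop_linrel[OF core(1)] L(3,4,1) green2 dense(1) Madj(2) mu B(3,4)])
    done
qed

end
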